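(* Let $a>b\ge 1$ be integers, $n=a+b$, and let $\breve{K}_{a,b}$ be the Mycielskian of the complete bipartite graph $K_{a,b}$. Then $$E_{\chi}(\breve{K}_{a,b})=1+\frac{2(b+1)}{2n+1},\qquad V_{\chi}(\breve{K}_{a,b})=\frac{16a^2+4b^2+8a^2b+8b^2a+24ab+8a+2b}{(2n+1)^3}.$$
   Context: Mycielskian: for a graph $G$ with vertex set $\{v_1,\dots,v_m\}$, its Mycielskian $\breve{G}$ is the graph with vertex set $\{v_1,\dots,v_m\}\cup\{u_1,\dots,u_m\}\cup\{u\}$ (all new, distinct vertices) whose edges are: all edges of $G$; the edge $u_iv_j$ whenever $v_iv_j$ is an edge of $G$; and the edges $uu_i$ for all $i$. Colouring parameters: for a proper colouring $\mathcal{C}=\{c_1,\dots,c_k\}$ of $G$ with colours indexed $1,\dots,k$, let $\theta(c_i)$ be the number of vertices of colour $c_i$ and $f(i)=\theta(c_i)/|V(G)|$. The colouring mean is $\mu_{\mathcal{C}}=\sum_i i\,f(i)$, the colouring variance is $\sum_i (i-\mu_{\mathcal{C}})^2 f(i)$, and the colouring sum is $\sum_i i\,\theta(c_i)$. The $\chi$-chromatic mean $E_\chi(G)$ (resp. $\chi$-chromatic variance $V_\chi(G)$) is the colouring mean (resp. variance) of a proper colouring of $G$ with exactly $\chi(G)$ colours $c_1,\dots,c_{\chi(G)}$ whose colouring sum is minimum among all such colourings. *)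

theory Defs
  imports Main Complex_Main
begin

text \<open>A finite simple graph is a pair (V, E) with E a set of 2-element subsets of V.\<close>
type_synonym 'v graph = "'v set \<times> 'v set set"

definition verts :: "'v graph \<Rightarrow> 'v set" where "verts G = fst G"
definition edges :: "'v graph \<Rightarrow> 'v set set" where "edges G = snd G"

definition proper_colouring :: "'v graph \<Rightarrow> nat \<Rightarrow> ('v \<Rightarrow> nat) \<Rightarrow> bool" where
  "proper_colouring G k f \<longleftrightarrow>
     (\<forall>v\<in>verts G. f v \<in> {1..k}) \<and>
     (\<forall>x y. {x, y} \<in> edges G \<longrightarrow> x \<noteq> y \<longrightarrow> f x \<noteq> f y)"

definition chromatic_number :: "'v graph \<Rightarrow> nat" where
  "chromatic_number G = (LEAST k. \<exists>f. proper_colouring G k f)"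

definition colour_class_size :: "'v graph \<Rightarrow> ('v \<Rightarrow> nat) \<Rightarrow> nat \<Rightarrow> nat" where
  "colour_class_size G f i = card {v \<in> verts G. f v = i}"

definition colour_freq :: "'v graph \<Rightarrow> ('v \<Rightarrow> nat) \<Rightarrow> nat \<Rightarrow> real" where
  "colour_freq G f i = real (colour_class_size G f i) / real (card (verts G))"

definition colouring_mean :: "'v graph \<Rightarrow> nat \<Rightarrow> ('v \<Rightarrow> nat) \<Rightarrow> real" where
  "colouring_mean G k f = (\<Sum>i=1..k. real i * colour_freq G f i)"

definition colouring_variance :: "'v graph \<Rightarrow> nat \<Rightarrow> ('v \<Rightarrow> nat) \<Rightarrow> real" where
  "colouring_variance G k f =
     (\<Sum>i=1..k. (real i - colouring_mean G k f)^2 * colour_freq G f i)"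

definition colouring_sum :: "'v graph \<Rightarrow> nat \<Rightarrow> ('v \<Rightarrow> nat) \<Rightarrow> nat" where
  "colouring_sum G k f = (\<Sum>i=1..k. i * colour_class_size G f i)"

definition min_chi_colouring :: "'v graph \<Rightarrow> ('v \<Rightarrow> nat) \<Rightarrow> bool" where
  "min_chi_colouring G f \<longleftrightarrow>
     proper_colouring G (chromatic_number G) f \<and>
     (\<forall>g. proper_colouring G (chromatic_number G) g \<longrightarrow>
          colouring_sum G (chromatic_number G) f \<le> colouring_sum G (chromatic_number G) g)"

definition chi_mean :: "'v graph \<Rightarrow> real" where
  "chi_mean G = colouring_mean G (chromatic_number G) (SOME f. min_chi_colouring G f)"

definition chi_variance :: "'v graph \<Rightarrow> real" where
  "chi_variance G = colouring_variance G (chromatic_number G) (SOME f. min_chi_colouring G f)"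

datatype 'v myc_vertex = Old 'v | Shadow 'v | Apex

definition mycielskian :: "'v graph \<Rightarrow> 'v myc_vertex graph" where
  "mycielskian G =
     (Old ` verts G \<union> Shadow ` verts G \<union> {Apex},
      {{Old x, Old y} | x y. {x, y} \<in> edges G} \<union>
      {{Shadow x, Old y} | x y. {x, y} \<in> edges G} \<union>
      {{Apex, Shadow x} | x. x \<in> verts G})"

definition complete_bipartite :: "nat \<Rightarrow> nat \<Rightarrow> (nat + nat) graph" where
  "complete_bipartite a b =
     (Inl ` {..<a} \<union> Inr ` {..<b},
      {{Inl i, Inr j} | i j. i < a \<and> j < b})"

end

theory Submission imports Defs begin

definition bip :: "nat \<Rightarrow> nat \<Rightarrow> nat + nat \<Rightarrow> nat + nat \<Rightarrow> bool" where
 "bip a b u v = (\<exists>i j. i<a \<and> j<b \<and> ((u = Inl i \<and> v = Inr j) \<or> (u = Inr j \<and> v = Inl i)))"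

fun adj :: "nat \<Rightarrow> nat \<Rightarrow> (nat+nat) myc_vertex \<Rightarrow> (nat+nat) myc_vertex \<Rightarrow> bool" where
  "adj a b (Old u) (Old v) = bip a b u v"
| "adj a b (Shadow u) (Old v) = bip a b u v"
| "adj a b (Old u) (Shadow v) = bip a b u v"
| "adj a b Apex (Shadow v) = (v \<in> Inl`{..<a} \<union> Inr`{..<b})"
| "adj a b (Shadow v) Apex = (v \<in> Inl`{..<a} \<union> Inr`{..<b})"
| "adj a b _ _ = False"

lemma bip_sym: "bip a b u v = bip a b v u" unfolding bip_def by blast

lemma edge_bip: "({x,y} \<in> edges (complete_bipartite a b)) = bip a b x y"
  unfolding edges_def complete_bipartite_def bip_def by (auto simp: doubleton_eq_iff)

lemma edge_bip': "(\<exists>i j. {x, y} = {Inl i, Inr j} \<and> i < a \<and> j < b) = bip a b x y"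
  unfolding bip_def by (auto simp: doubleton_eq_iff)

lemma verts_G: "verts (mycielskian (complete_bipartite a b)) =
   Old ` (Inl`{..<a} \<union> Inr`{..<b}) \<union> Shadow ` (Inl`{..<a} \<union> Inr`{..<b}) \<union> {Apex}"
  by (simp add: mycielskian_def verts_def complete_bipartite_def)

lemma edge_G: "({x,y} \<in> edges (mycielskian (complete_bipartite a b))) = adj a b x y"
proof -
  have E: "edges (mycielskian (complete_bipartite a b)) =
      {{Old x, Old y} | x y. bip a b x y} \<union>
      {{Shadow x, Old y} | x y. bip a b x y} \<union>
      {{Apex, Shadow x} | x. x \<in> Inl`{..<a} \<union> Inr`{..<b}}"
    by (simp add: mycielskian_def edge_bip verts_def complete_bipartite_def)
      (simp add: edges_def edge_bip')
  show ?thesis unfolding E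
    by (cases x; cases y) (auto simp: doubleton_eq_iff bip_sym)
qed

lemma card_V: "card (Inl`{..<a} \<union> Inr`{..<b} :: (nat+nat) set) = a + b"
  by (subst card_Un_disjoint) (auto simp: card_image)

lemma fin_V: "finite (Inl`{..<a} \<union> Inr`{..<b} :: (nat+nat) set)" by simp

lemma card_verts: "card (verts (mycielskian (complete_bipartite a b))) = 2*(a+b)+1"
proof -
  let ?V = "Inl`{..<a} \<union> Inr`{..<b} :: (nat+nat) set"
  have "card (Old ` ?V \<union> Shadow ` ?V \<union> {Apex}) = card (Old ` ?V \<union> Shadow ` ?V) + 1"
    by (subst card_Un_disjoint) auto
  also have "card (Old ` ?V \<union> Shadow ` ?V) = card (Old ` ?V) + card (Shadow ` ?V)"
    by (rule card_Un_disjoint) auto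
  also have "card (Old ` ?V) = a + b" by (subst card_image) (auto simp: card_V inj_on_def)
  also have "card (Shadow ` ?V) = a + b" by (subst card_image) (auto simp: card_V inj_on_def)
  finally show ?thesis by (simp add: verts_G)
qed

lemma fin_verts: "finite (verts (mycielskian (complete_bipartite a b)))"
  by (simp add: verts_G)

lemma no2:
  assumes "\<forall>x y. {x,y} \<in> edges (mycielskian (complete_bipartite a b)) \<longrightarrow> x\<noteq>y \<longrightarrow> f x \<noteq> f y"
    "\<forall>v\<in>verts (mycielskian (complete_bipartite a b)). f v \<in> {1..2::nat}" "b\<ge>1" "a>b"
  shows False
proof -
  have e: "\<And>x y. adj a b x y \<Longrightarrow> x \<noteq> y \<Longrightarrow> f x \<noteq> f y" using assms(1) by (simp add: edge_G)
  have 1: "f Apex \<noteq> f (Shadow (Inl 0))" using e[of Apex "Shadow (Inl 0)"] assms by auto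
  have 2: "f (Shadow (Inl 0)) \<noteq> f (Old (Inr 0))" using e[of "Shadow (Inl 0)" "Old (Inr 0)"] assms by (auto simp: bip_def)
  have 3: "f (Old (Inr 0)) \<noteq> f (Old (Inl 0))" using e[of "Old (Inr 0)" "Old (Inl 0)"] assms by (auto simp: bip_def)
  have 4: "f (Old (Inl 0)) \<noteq> f (Shadow (Inr 0))" using e[of "Old (Inl 0)" "Shadow (Inr 0)"] assms by (auto simp: bip_def)
  have 5: "f (Shadow (Inr 0)) \<noteq> f Apex" using e[of "Shadow (Inr 0)" Apex] assms by auto
  have v: "f Apex \<in> {1..2}" "f (Shadow (Inl 0)) \<in> {1..2}" "f (Old (Inr 0)) \<in> {1..2}"
     "f (Old (Inl 0)) \<in> {1..2}" "f (Shadow (Inr 0)) \<in> {1..2}"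
    using assms(2-4) by (auto simp: verts_G)
  show False using 1 2 3 4 5 v by auto
qed

fun c0 :: "(nat+nat) myc_vertex \<Rightarrow> nat" where
  "c0 (Old (Inl _)) = 1" | "c0 (Shadow (Inl _)) = 1" | "c0 (Old (Inr _)) = 2"
| "c0 (Shadow (Inr _)) = 2" | "c0 Apex = 3"

lemma c0_proper: "proper_colouring (mycielskian (complete_bipartite a b)) 3 c0"
proof -
  have "\<And>x y. adj a b x y \<Longrightarrow> c0 x \<noteq> c0 y"
    subgoal for x y by (cases x; cases y) (auto simp: bip_def)
    done
  moreover have "\<And>v. c0 v \<in> {1..3}" subgoal for v by (cases v rule: c0.cases) auto done
  ultimately show ?thesis unfolding proper_colouring_def by (auto simp: edge_G)
qed

lemma chi3: assumes "b\<ge>1" "a>b" shows "chromatic_number (mycielskian (complete_bipartite a b)) = 3"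
  unfolding chromatic_number_def
proof (rule Least_equality)
  show "\<exists>f. proper_colouring (mycielskian (complete_bipartite a b)) 3 f" using c0_proper by blast
next
  fix k assume "\<exists>f. proper_colouring (mycielskian (complete_bipartite a b)) k f"
  then obtain f where f: "proper_colouring (mycielskian (complete_bipartite a b)) k f" by blast
  show "3 \<le> k"
  proof (rule ccontr)
    assume "\<not> 3 \<le> k"
    then show False using f no2[of a b f] assms unfolding proper_colouring_def by fastforce
  qed
qed

fun h :: "nat \<Rightarrow> (nat+nat) myc_vertex \<Rightarrow> bool \<times> nat" where
  "h b (Old (Inl i)) = (False,i)" | "h b (Shadow (Inr j)) = (False, j)"
| "h b (Shadow (Inl i)) = (True,i)" | "h b (Old (Inr j)) = (True,j)" | "h b Apex = (True,b)"

lemma h_adj: assumes "a > b" "x \<in> verts (mycielskian (complete_bipartite a b))"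
   "y \<in> verts (mycielskian (complete_bipartite a b))" "h b x = h b y" "x \<noteq> y"
  shows "adj a b x y"
  using assms by (cases x rule: c0.cases; cases y rule: c0.cases) (auto simp: verts_G bip_def)

lemma h_range: assumes "a > b" "x \<in> verts (mycielskian (complete_bipartite a b))"
  shows "h b x \<in> UNIV \<times> {..<a}"
  using assms by (cases x rule: c0.cases) (auto simp: verts_G)

lemma indep: assumes "a > b" "I \<subseteq> verts (mycielskian (complete_bipartite a b))"
  "\<And>x y. x \<in> I \<Longrightarrow> y \<in> I \<Longrightarrow> x \<noteq> y \<Longrightarrow> \<not> adj a b x y"
  shows "card I \<le> 2*a"
proof -
  have "inj_on (h b) I" unfolding inj_on_def using assms h_adj by blast
  hence "card I = card (h b ` I)" by (simp add: card_image)
  also have "\<dots> \<le> card (UNIV \<times> {..<a} :: (bool \<times> nat) set)"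
  proof (rule card_mono)
    show "h b ` I \<subseteq> UNIV \<times> {..<a}" using assms h_range by blast
  qed simp
  also have "\<dots> = 2*a" by (simp add: card_cartesian_product)
  finally show ?thesis .
qed

lemma part3: assumes "finite S" "\<forall>v\<in>S. g v \<in> {1..3::nat}"
  shows "card {v\<in>S. g v = 1} + card {v\<in>S. g v = 2} + card {v\<in>S. g v = 3} = card S"
proof -
  have S: "S = {v\<in>S. g v = 1} \<union> {v\<in>S. g v = 2} \<union> {v\<in>S. g v = 3}" using assms(2) by auto
  have "card S = card ({v\<in>S. g v = 1} \<union> {v\<in>S. g v = 2}) + card {v\<in>S. g v = 3}"
    by (subst S, rule card_Un_disjoint) (use assms(1) in auto)
  also have "card ({v\<in>S. g v = 1} \<union> {v\<in>S. g v = 2}) = card {v\<in>S. g v = 1} + card {v\<in>S. g v = 2}"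
    by (rule card_Un_disjoint) (use assms(1) in auto)
  finally show ?thesis by simp
qed

lemma sum3: "(\<Sum>i=1..3::nat. F i) = F 1 + F 2 + F (3::nat)"
proof -
  have "{1..3::nat} = {1,2,3}" by auto
  thus ?thesis by (simp add: ac_simps)
qed

lemma c0_cls:
  "colour_class_size (mycielskian (complete_bipartite a b)) c0 1 = 2*a"
  "colour_class_size (mycielskian (complete_bipartite a b)) c0 2 = 2*b"
  "colour_class_size (mycielskian (complete_bipartite a b)) c0 3 = 1"
proof -
  have "{v \<in> verts (mycielskian (complete_bipartite a b)). c0 v = 1} = Old`Inl`{..<a} \<union> Shadow`Inl`{..<a}"
    by (auto simp: verts_G)
  moreover have "card (Old`Inl`{..<a} \<union> Shadow`Inl`{..<a} :: (nat+nat) myc_vertex set) = 2*a"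
    by (subst card_Un_disjoint) (auto simp: card_image inj_on_def)
  ultimately show "colour_class_size (mycielskian (complete_bipartite a b)) c0 1 = 2*a"
    by (simp add: colour_class_size_def)
  have "{v \<in> verts (mycielskian (complete_bipartite a b)). c0 v = 2} = Old`Inr`{..<b} \<union> Shadow`Inr`{..<b}"
    by (auto simp: verts_G)
  moreover have "card (Old`Inr`{..<b} \<union> Shadow`Inr`{..<b} :: (nat+nat) myc_vertex set) = 2*b"
    by (subst card_Un_disjoint) (auto simp: card_image inj_on_def)
  ultimately show "colour_class_size (mycielskian (complete_bipartite a b)) c0 2 = 2*b"
    by (simp add: colour_class_size_def)
  have "{v \<in> verts (mycielskian (complete_bipartite a b)). c0 v = 3} = {Apex}"
    by (auto simp: verts_G)
  thus "colour_class_size (mycielskian (complete_bipartite a b)) c0 3 = 1"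
    by (simp add: colour_class_size_def)
qed

lemma lower:
  assumes "b\<ge>1" "a>b" "proper_colouring (mycielskian (complete_bipartite a b)) 3 g"
  shows "colour_class_size (mycielskian (complete_bipartite a b)) g 1 \<le> 2*a"
    "colour_class_size (mycielskian (complete_bipartite a b)) g 3 \<ge> 1"
    "colour_class_size (mycielskian (complete_bipartite a b)) g 1 +
     colour_class_size (mycielskian (complete_bipartite a b)) g 2 +
     colour_class_size (mycielskian (complete_bipartite a b)) g 3 = 2*a+2*b+1"
proof -
  let ?G = "mycielskian (complete_bipartite a b)"
  have p1: "\<forall>v\<in>verts ?G. g v \<in> {1..3}" and p2: "\<And>x y. adj a b x y \<Longrightarrow> x \<noteq> y \<Longrightarrow> g x \<noteq> g y"
    using assms(3) unfolding proper_colouring_def by (auto simp: edge_G)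
  show "colour_class_size ?G g 1 \<le> 2*a" unfolding colour_class_size_def
    apply (rule indep[OF assms(2)])
     apply auto[1]
    apply (metis (mono_tags, lifting) mem_Collect_eq p2)
    done
  show "colour_class_size ?G g 1 + colour_class_size ?G g 2 + colour_class_size ?G g 3 = 2*a+2*b+1"
    unfolding colour_class_size_def using part3[OF fin_verts p1] card_verts by simp
  show "colour_class_size ?G g 3 \<ge> 1"
  proof (rule ccontr)
    assume "\<not> 1 \<le> colour_class_size ?G g 3"
    hence "card {v \<in> verts ?G. g v = 3} = 0" unfolding colour_class_size_def by simp
    hence "{v \<in> verts ?G. g v = 3} = {}" using fin_verts[of a b] by simp
    hence "\<forall>v\<in>verts ?G. g v \<in> {1..2}" using p1 by fastforce
    moreover have "\<forall>x y. {x,y} \<in> edges ?G \<longrightarrow> x\<noteq>y \<longrightarrow> g x \<noteq> g y"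
      using assms(3) unfolding proper_colouring_def by auto
    ultimately show False using no2 assms(1,2) by blast
  qed
qed

lemma var_alg: fixes a b N :: real assumes "N = 2*a+2*b+1" "N > 0"
  shows "(1 - (2*a+4*b+3)/N)^2*(2*a/N) + (2 - (2*a+4*b+3)/N)^2*(2*b/N) + (3 - (2*a+4*b+3)/N)^2*(1/N)
    = (16 * a ^ 2 + 4 * b ^ 2 + 8 * a ^ 2 * b + 8 * b ^ 2 * a
              + 24 * a * b + 8 * a + 2 * b) / N ^ 3"
proof -
  have nz: "N \<noteq> 0" using assms(2) by simp
  have e: "(1 - (2*a+4*b+3)/N) = (N - (2*a+4*b+3))/N" "(2 - (2*a+4*b+3)/N) = (2*N - (2*a+4*b+3))/N"
     "(3 - (2*a+4*b+3)/N) = (3*N - (2*a+4*b+3))/N" using nz by (simp_all add: field_simps)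
  have "(N - (2*a+4*b+3))^2*(2*a) + (2*N - (2*a+4*b+3))^2*(2*b) + (3*N - (2*a+4*b+3))^2
     = (16 * a ^ 2 + 4 * b ^ 2 + 8 * a ^ 2 * b + 8 * b ^ 2 * a
              + 24 * a * b + 8 * a + 2 * b)"
    unfolding assms(1) by (simp add: power2_eq_square algebra_simps)
  moreover have "(1 - (2*a+4*b+3)/N)^2*(2*a/N) + (2 - (2*a+4*b+3)/N)^2*(2*b/N) + (3 - (2*a+4*b+3)/N)^2*(1/N)
     = ((N - (2*a+4*b+3))^2*(2*a) + (2*N - (2*a+4*b+3))^2*(2*b) + (3*N - (2*a+4*b+3))^2) / N^3"
    unfolding e by (simp add: power_divide add_divide_distrib power3_eq_cube power2_eq_square)
  ultimately show ?thesis by simp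
qed

theorem theorem2p5:
  fixes a b :: nat
  assumes "b \<ge> 1" and "a > b"
  defines "n \<equiv> a + b"
  shows "chi_mean (mycielskian (complete_bipartite a b))
           = 1 + 2 * (real b + 1) / (2 * real n + 1) \<and>
         chi_variance (mycielskian (complete_bipartite a b))
           = (16 * real a ^ 2 + 4 * real b ^ 2 + 8 * real a ^ 2 * real b + 8 * real b ^ 2 * real a
              + 24 * real a * real b + 8 * real a + 2 * real b) / (2 * real n + 1) ^ 3"
proof -
  let ?G = "mycielskian (complete_bipartite a b)"
  have chi: "chromatic_number ?G = 3" using chi3 assms by blast
  have sc0: "colouring_sum ?G 3 c0 = 2*a + 4*b + 3"
    unfolding colouring_sum_def sum3 c0_cls by simp
  have "min_chi_colouring ?G c0"
    unfolding min_chi_colouring_def chi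
  proof (intro conjI allI impI)
    show "proper_colouring ?G 3 c0" by (rule c0_proper)
    fix g assume g: "proper_colouring ?G 3 g"
    from lower[OF assms(1,2) g] show "colouring_sum ?G 3 c0 \<le> colouring_sum ?G 3 g"
      unfolding colouring_sum_def sum3 c0_cls by linarith
  qed
  hence mg: "min_chi_colouring ?G (SOME f. min_chi_colouring ?G f)"
    using someI[of "min_chi_colouring ?G" c0] by blast
  define g where "g = (SOME f. min_chi_colouring ?G f)"
  have g: "proper_colouring ?G 3 g" "colouring_sum ?G 3 g \<le> colouring_sum ?G 3 c0"
  proof -
    have "min_chi_colouring ?G g" using mg unfolding g_def .
    thus "proper_colouring ?G 3 g" "colouring_sum ?G 3 g \<le> colouring_sum ?G 3 c0"
      using c0_proper unfolding min_chi_colouring_def chi by auto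
  qed
  note L = lower[OF assms(1,2) g(1)]
  have t1: "colour_class_size ?G g 1 = 2*a" and t2: "colour_class_size ?G g 2 = 2*b"
    and t3: "colour_class_size ?G g 3 = 1"
    using L g(2) unfolding colouring_sum_def sum3 c0_cls by linarith+
  have N: "card (verts ?G) = 2*n+1" using card_verts n_def by simp
  have fr: "colour_freq ?G g 1 = 2*real a/(2*real n+1)" "colour_freq ?G g 2 = 2*real b/(2*real n+1)"
      "colour_freq ?G g 3 = 1/(2*real n+1)"
    unfolding colour_freq_def t1 t2 t3 N by simp_all
  have mean: "colouring_mean ?G 3 g = (2*real a + 4*real b + 3)/(2*real n+1)"
    unfolding colouring_mean_def sum3 fr by (simp add: add_divide_distrib)
  have pos: "(2 * real n + 1) > 0" by simp
  show ?thesis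
  proof
    show "chi_mean ?G = 1 + 2 * (real b + 1) / (2 * real n + 1)"
      unfolding chi_mean_def chi g_def[symmetric] mean using pos by (simp add: field_simps n_def)
    show "chi_variance ?G = (16 * real a ^ 2 + 4 * real b ^ 2 + 8 * real a ^ 2 * real b + 8 * real b ^ 2 * real a
              + 24 * real a * real b + 8 * real a + 2 * real b) / (2 * real n + 1) ^ 3"
      unfolding chi_variance_def chi g_def[symmetric] colouring_variance_def sum3 fr mean
      using var_alg[of "2*real n+1" "real a" "real b"] by (simp add: n_def)
  qed
qed

end
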